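(* Let $b,c_1,c_2$ be positive integers and let $\alpha/\beta$ be the right lobster $\mathcal{L}^{c_1,c_2}_b$, with $c_1$, $b$, $c_2$ cells in the top, middle and bottom rows respectively. Then $$\mathrm{inv}(S^{\mathrm{col}}_{\alpha/\beta})=c_1\bigl(b+\min\{c_1,c_2\}\bigr)+\binom{b}{2}+\binom{\max\{c_1,c_2\}}{2}.$$
   Context: Rows are numbered from the bottom. The right lobster $\mathcal{L}^{c_1,c_2}_b$ is the skew diagram $\alpha/\beta$ with $\alpha=(b+1+c_2,b+1,b+1+c_1)$, $\beta=(b+1,1,b+1)$: a bottom row of $c_2$ cells in columns $b+2,\ldots,b+1+c_2$, a middle row of $b$ cells in columns $2,\ldots,b+1$, and a top row of $c_1$ cells in columns $b+2,\ldots,b+1+c_1$. $S^{\mathrm{col}}_{\alpha/\beta}$ is the filling of $\alpha/\beta$ with $1,\ldots,b+c_1+c_2$ consecutively along columns bottom to top, from the leftmost column rightward. For a tableau $T$, $\mathrm{inv}(T)$ is the number of inversions (pairs of positions $p<q$ with the $p$th letter larger than the $q$th) of its reading word, obtained by reading each row right to left, starting from the top row and moving down. *)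

theory Defs
  imports Main
begin

text \<open>Skew diagrams alpha/beta given by lists of row lengths, rows numbered from the
bottom: entry i of the list (0-based) is row i+1 counted from the bottom.
A cell is a pair (row, column); columns are 1-based.\<close>

definition skew_cells :: "nat list \<Rightarrow> nat list \<Rightarrow> (nat \<times> nat) set" where
  "skew_cells \<alpha> \<beta> = {(i, j). i < length \<alpha> \<and> \<beta> ! i < j \<and> j \<le> \<alpha> ! i}"

text \<open>Column filling: cells numbered 1,2,... consecutively along columns from bottom to top,
leftmost column first.\<close>

definition S_col :: "nat list \<Rightarrow> nat list \<Rightarrow> nat \<times> nat \<Rightarrow> nat" where
  "S_col \<alpha> \<beta> c = card {(i', j') \<in> skew_cells \<alpha> \<beta>.
       j' < snd c \<or> (j' = snd c \<and> i' < fst c)} + 1"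

definition reading_word :: "nat list \<Rightarrow> nat list \<Rightarrow> (nat \<times> nat \<Rightarrow> nat) \<Rightarrow> nat list" where
  "reading_word \<alpha> \<beta> T =
     concat (map (\<lambda>i. map (\<lambda>j. T (i, j)) (rev [\<beta> ! i + 1 ..< \<alpha> ! i + 1]))
                 (rev [0 ..< length \<alpha>]))"

definition inversions :: "nat list \<Rightarrow> nat" where
  "inversions w = card {(p, q). p < q \<and> q < length w \<and> w ! p > w ! q}"

definition tab_inv :: "nat list \<Rightarrow> nat list \<Rightarrow> (nat \<times> nat \<Rightarrow> nat) \<Rightarrow> nat" where
  "tab_inv \<alpha> \<beta> T = inversions (reading_word \<alpha> \<beta> T)"

definition lobster_alpha :: "nat \<Rightarrow> nat \<Rightarrow> nat \<Rightarrow> nat list" where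
  "lobster_alpha c1 c2 b = [b + 1 + c2, b + 1, b + 1 + c1]"

definition lobster_beta :: "nat \<Rightarrow> nat list" where
  "lobster_beta b = [b + 1, 1, b + 1]"

end

theory Submission
  imports Defs
begin

fun invr :: "nat list \<Rightarrow> nat" where
  "invr [] = 0"
| "invr (x # xs) = length (filter (\<lambda>y. y < x) xs) + invr xs"

lemma inversions_invr: "inversions xs = invr xs"
proof (induction xs)
  case Nil
  then show ?case by (simp add: inversions_def)
next
  case (Cons x xs)
  let ?A = "{(p, q). p < q \<and> q < length xs \<and> xs ! p > xs ! q}"
  let ?B = "{q. q < length xs \<and> xs ! q < x}"
  have eq: "{(p, q). p < q \<and> q < length (x # xs) \<and> (x # xs) ! p > (x # xs) ! q}
      = (\<lambda>q. (0, Suc q)) ` ?B \<union> (\<lambda>(p, q). (Suc p, Suc q)) ` ?A"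
  proof (intro set_eqI iffI)
    fix z assume "z \<in> {(p, q). p < q \<and> q < length (x # xs) \<and> (x # xs) ! p > (x # xs) ! q}"
    then obtain p q where z: "z = (p, q)" "p < q" "q < length (x # xs)" "(x # xs) ! p > (x # xs) ! q"
      by auto
    then obtain q' where q': "q = Suc q'" by (cases q) auto
    show "z \<in> (\<lambda>q. (0, Suc q)) ` ?B \<union> (\<lambda>(p, q). (Suc p, Suc q)) ` ?A"
    proof (cases p)
      case 0 then show ?thesis using z q' by auto
    next
      case (Suc p')
      then have "(p', q') \<in> ?A" using z q' by auto
      then show ?thesis using z q' Suc by force
    qed
  qed auto
  have fA: "finite ?A" by (rule finite_subset[of _ "{..<length xs} \<times> {..<length xs}"]) auto
  have fB: "finite ?B" by auto
  have "inversions (x # xs) = card ((\<lambda>q. (0::nat, Suc q)) ` ?B \<union> (\<lambda>(p, q). (Suc p, Suc q)) ` ?A)"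
    unfolding inversions_def eq ..
  also have "\<dots> = card ((\<lambda>q. (0::nat, Suc q)) ` ?B) + card ((\<lambda>(p, q). (Suc p, Suc q)) ` ?A)"
    by (rule card_Un_disjoint) (use fA fB in auto)
  also have "card ((\<lambda>q. (0::nat, Suc q)) ` ?B) = card ?B"
    by (rule card_image) (auto simp: inj_on_def)
  also have "card ((\<lambda>(p, q). (Suc p, Suc q)) ` ?A) = card ?A"
    by (rule card_image) (auto simp: inj_on_def)
  also have "card ?A = invr xs" using Cons by (simp add: inversions_def)
  also have "card ?B = length (filter (\<lambda>y. y < x) xs)" by (simp add: length_filter_conv_card)
  finally show ?case by simp
qed

definition cross :: "nat list \<Rightarrow> nat list \<Rightarrow> nat" where
  "cross xs ys = sum_list (map (\<lambda>x. length (filter (\<lambda>y. y < x) ys)) xs)"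

lemma invr_append: "invr (xs @ ys) = invr xs + invr ys + cross xs ys"
  by (induction xs) (auto simp: cross_def)

lemma cross_append2: "cross xs (ys @ zs) = cross xs ys + cross xs zs"
  by (induction xs) (auto simp: cross_def)

lemma invr_dec: "sorted_wrt (>) xs \<Longrightarrow> invr xs = length xs choose 2"
proof (induction xs)
  case Nil then show ?case by simp
next
  case (Cons x xs)
  have "filter (\<lambda>y. y < x) xs = xs" using Cons.prems by (auto intro: filter_True)
  then show ?case using Cons by (simp add: numeral_2_eq_2)
qed

lemma S_col_formula:
  "S_col \<alpha> \<beta> (i, j) = 1 + (\<Sum>r<length \<alpha>. min (\<alpha>!r) (if r < i then j else j - 1) - \<beta>!r)"
proof -
  have "{(i', j') \<in> skew_cells \<alpha> \<beta>. j' < j \<or> (j' = j \<and> i' < i)}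
     = (SIGMA r:{..<length \<alpha>}. {\<beta>!r<..min (\<alpha>!r) (if r < i then j else j - 1)})"
    by (auto simp: skew_cells_def split: if_splits)
  then show ?thesis by (simp add: S_col_def add.commute)
qed


lemma sum3: "(\<Sum>r<(3::nat). f r) = f 0 + f 1 + (f 2 :: nat)"
  by (simp add: eval_nat_numeral)

lemma rw_lobster:
  fixes b c1 c2 :: nat
  defines "\<alpha> \<equiv> lobster_alpha c1 c2 b" and "\<beta> \<equiv> lobster_beta b"
  shows "reading_word \<alpha> \<beta> (S_col \<alpha> \<beta>) =
     map (\<lambda>j. j - 1 + min (j - (b+1)) c2) (rev [b+2..<b+2+c1]) @
     map (\<lambda>j. j - 1) (rev [2..<b+2]) @
     map (\<lambda>j. j - 1 + min c1 (j - (b+2))) (rev [b+2..<b+2+c2])"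
proof -
  have r: "rev [0..<3] = [2,1,0::nat]" by (simp add: eval_nat_numeral)
  have top: "map (\<lambda>j. S_col \<alpha> \<beta> (2, j)) xs = map (\<lambda>j. j - 1 + min (j - (b+1)) c2) xs"
    if "set xs \<subseteq> {b+2..<b+2+c1}" for xs
    using that by (intro map_cong) (auto simp: S_col_formula sum3 \<alpha>_def \<beta>_def lobster_alpha_def lobster_beta_def min_def subset_iff)
  have mid: "map (\<lambda>j. S_col \<alpha> \<beta> (1, j)) xs = map (\<lambda>j. j - 1) xs"
    if "set xs \<subseteq> {2..<b+2}" for xs
    using that by (intro map_cong) (auto simp: S_col_formula sum3 \<alpha>_def \<beta>_def lobster_alpha_def lobster_beta_def min_def subset_iff)
  have bot: "map (\<lambda>j. S_col \<alpha> \<beta> (0, j)) xs = map (\<lambda>j. j - 1 + min c1 (j - (b+2))) xs"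
    if "set xs \<subseteq> {b+2..<b+2+c2}" for xs
    using that by (intro map_cong) (auto simp: S_col_formula sum3 \<alpha>_def \<beta>_def lobster_alpha_def lobster_beta_def min_def subset_iff)
  have r2: "rev [0..<length \<alpha>] = [2,1,0::nat]" using r by (simp add: \<alpha>_def lobster_alpha_def)
  have ix: "\<beta>!2+1 = b+2" "\<alpha>!2+1 = b+2+c1" "\<beta>!1+1 = 2" "\<alpha>!1+1 = b+2"
     "\<beta>!0+1 = b+2" "\<alpha>!0+1 = b+2+c2"
    by (simp_all add: \<alpha>_def \<beta>_def lobster_alpha_def lobster_beta_def)
  have "reading_word \<alpha> \<beta> (S_col \<alpha> \<beta>) =
     map (\<lambda>j. S_col \<alpha> \<beta> (2, j)) (rev [\<beta>!2+1..<\<alpha>!2+1]) @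
     map (\<lambda>j. S_col \<alpha> \<beta> (1, j)) (rev [\<beta>!1+1..<\<alpha>!1+1]) @
     map (\<lambda>j. S_col \<alpha> \<beta> (0, j)) (rev [\<beta>!0+1..<\<alpha>!0+1])"
    unfolding reading_word_def r2 by simp
  also have "\<dots> = map (\<lambda>j. S_col \<alpha> \<beta> (2, j)) (rev [b+2..<b+2+c1]) @
     map (\<lambda>j. S_col \<alpha> \<beta> (1, j)) (rev [2..<b+2]) @
     map (\<lambda>j. S_col \<alpha> \<beta> (0, j)) (rev [b+2..<b+2+c2])"
    unfolding ix ..
  finally show ?thesis
    by (simp only: top[of "rev [b+2..<b+2+c1]"] mid[of "rev [2..<b+2]"] bot[of "rev [b+2..<b+2+c2]"]
         set_rev atLeastLessThan_upt subset_refl)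
qed


lemma key_sum: "(\<Sum>j\<in>{b+2..<b+2+c1}. min (j-(b+1)) c2) + (c1 choose 2) + (c2 choose 2)
   = c1 * min c1 c2 + (max c1 c2 choose 2)"
proof (induction c1)
  case 0 then show ?case by simp
next
  case (Suc c1)
  have s: "{b+2..<b+2+Suc c1} = insert (b+2+c1) {b+2..<b+2+c1}" by auto
  have c: "Suc n choose 2 = n + (n choose 2)" for n
    by (simp add: numeral_2_eq_2)
  show ?case
  proof (cases "Suc c1 \<le> c2")
    case True
    then have "max (Suc c1) c2 = max c1 c2" "min (Suc c1) c2 = Suc c1" "min c1 c2 = c1" by auto
    then show ?thesis using Suc s c[of c1] True by (simp add: algebra_simps)
  next
    case False
    then have "max (Suc c1) c2 = Suc c1" "max c1 c2 = c1" "min (Suc c1) c2 = c2" "min c1 c2 = c2" by auto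
    then show ?thesis using Suc s c[of c1] False by (simp add: algebra_simps)
  qed
qed

lemma count_tb:
  assumes "b+2 \<le> j" "j < b+2+c1"
  shows "length (filter (\<lambda>y. y < j - 1 + min (j - (b+1)) c2)
            (map (\<lambda>j. j - 1 + min c1 (j - (b+2))) (rev [b+2..<b+2+c2]))) = min (j-(b+1)) c2"
proof -
  have "length (filter (\<lambda>y. y < j - 1 + min (j - (b+1)) c2)
            (map (\<lambda>j. j - 1 + min c1 (j - (b+2))) (rev [b+2..<b+2+c2])))
      = length (filter (\<lambda>j'. j' - 1 + min c1 (j' - (b+2)) < j - 1 + min (j - (b+1)) c2) [b+2..<b+2+c2])"
    by (simp add: filter_map rev_filter[symmetric] o_def del: upt_Suc)
  also have "\<dots> = card ({j'. j' - 1 + min c1 (j' - (b+2)) < j - 1 + min (j - (b+1)) c2} \<inter> {b+2..<b+2+c2})"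
    by (simp add: distinct_length_filter del: upt_Suc)
  also have "{j'. j' - 1 + min c1 (j' - (b+2)) < j - 1 + min (j - (b+1)) c2} \<inter> {b+2..<b+2+c2}
      = {b+2..<b+2+min (j-(b+1)) c2}"
    using assms by (auto simp: min_def)
  finally show ?thesis by simp
qed

theorem lemma5p7:
  fixes b c1 c2 :: nat
  assumes "b > 0" and "c1 > 0" and "c2 > 0"
  shows "tab_inv (lobster_alpha c1 c2 b) (lobster_beta b)
           (S_col (lobster_alpha c1 c2 b) (lobster_beta b))
         = c1 * (b + min c1 c2) + (b choose 2) + (max c1 c2 choose 2)"
proof -
  define T where "T = map (\<lambda>j. j - 1 + min (j - (b+1)) c2) (rev [b+2..<b+2+c1])"
  define M where "M = map (\<lambda>j. j - 1) (rev [2..<b+2])"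
  define B where "B = map (\<lambda>j. j - 1 + min c1 (j - (b+2))) (rev [b+2..<b+2+c2])"
  have inv: "tab_inv (lobster_alpha c1 c2 b) (lobster_beta b)
           (S_col (lobster_alpha c1 c2 b) (lobster_beta b)) = invr (T @ M @ B)"
    unfolding tab_inv_def rw_lobster inversions_invr T_def M_def B_def ..
  have split: "invr (T @ M @ B) = invr T + invr M + invr B + cross M B + cross T M + cross T B"
    by (simp add: invr_append cross_append2)
  have iT: "invr T = c1 choose 2"
  proof -
    have "sorted_wrt (>) T" unfolding T_def sorted_wrt_map sorted_wrt_rev
      by (rule sorted_wrt_mono_rel[OF _ sorted_wrt_upt]) (auto simp: min_def)
    then show ?thesis by (simp add: invr_dec T_def del: upt_Suc)
  qed
  have iM: "invr M = b choose 2"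
  proof -
    have "sorted_wrt (>) M" unfolding M_def sorted_wrt_map sorted_wrt_rev
      by (rule sorted_wrt_mono_rel[OF _ sorted_wrt_upt]) auto
    then show ?thesis by (simp add: invr_dec M_def del: upt_Suc)
  qed
  have iB: "invr B = c2 choose 2"
  proof -
    have "sorted_wrt (>) B" unfolding B_def sorted_wrt_map sorted_wrt_rev
      by (rule sorted_wrt_mono_rel[OF _ sorted_wrt_upt]) (auto simp: min_def)
    then show ?thesis by (simp add: invr_dec B_def del: upt_Suc)
  qed
  have cMB: "cross M B = 0"
    unfolding cross_def M_def B_def
    by (auto simp: filter_empty_conv intro!: sum_list_eq_0_iff[THEN iffD2])
  have cTM: "cross T M = c1 * b"
  proof -
    have Mb: "\<forall>y\<in>set M. y \<le> b" by (auto simp: M_def)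
    have Tb: "\<forall>x\<in>set T. b < x" by (auto simp: T_def)
    have lM: "length M = b" by (simp add: M_def del: upt_Suc)
    have "cross T M = sum_list (map (\<lambda>x. b) T)"
      unfolding cross_def
    proof (rule arg_cong[where f=sum_list], rule map_cong[OF refl])
      fix x assume "x \<in> set T"
      then have "filter (\<lambda>y. y < x) M = M" using Mb Tb by (intro filter_True) fastforce
      then show "length (filter (\<lambda>y. y < x) M) = b" using lM by simp
    qed
    moreover have "length T = c1" by (simp add: T_def del: upt_Suc)
    ultimately show ?thesis by (simp add: sum_list_triv del: upt_Suc)
  qed
  have cTB: "cross T B = (\<Sum>j\<in>{b+2..<b+2+c1}. min (j-(b+1)) c2)"
  proof -
    have "cross T B = sum_list (map (\<lambda>j. min (j-(b+1)) c2) (rev [b+2..<b+2+c1]))"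
      unfolding cross_def T_def B_def map_map o_def
    proof (rule arg_cong[where f=sum_list], rule map_cong[OF refl])
      fix x assume "x \<in> set (rev [b+2..<b+2+c1])"
      then have "b+2 \<le> x" "x < b+2+c1" by auto
      from count_tb[OF this, of c2]
      show "length (filter (\<lambda>y. y < x - 1 + min (x - (b + 1)) c2)
              (map (\<lambda>j. j - 1 + min c1 (j - (b + 2))) (rev [b + 2..<b + 2 + c2]))) =
            min (x - (b + 1)) c2" .
    qed
    also have "\<dots> = (\<Sum>j\<in>{b+2..<b+2+c1}. min (j-(b+1)) c2)"
      by (simp add: rev_map[symmetric] sum_list_rev sum_set_upt_conv_sum_list_nat[symmetric] del: upt_Suc)
    finally show ?thesis .
  qed
  show ?thesis
  proof -
    have K: "(\<Sum>j\<in>{b+2..<b+2+c1}. min (j-(b+1)) c2) + (c1 choose 2) + (c2 choose 2)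
        = c1 * min c1 c2 + (max c1 c2 choose 2)" by (rule key_sum)
    show ?thesis unfolding inv split iT iM iB cMB cTM cTB distrib_left
      using K by linarith
  qed
qed

end
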